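(* Let $p/q\in\mathcal S$. There exists a lattice $\Lambda_{p,q}\in C(p,q)$ such that: (1) $|\Lambda_{p,q}|=\min\{|\Lambda|:\Lambda\in C(p,q)\}=\sqrt q$; (2) $\det(\Lambda_{p,q})=\min\{\det(\Lambda):\Lambda\in C(p,q)\}=p$; (3) the norm form of $\Lambda_{p,q}$ with respect to a minimal basis (a basis consisting of two minimal vectors) is $Q_{p,q}(x,y)=qx^2+2xy\sqrt{q^2-p^2}+qy^2$; (4) for every $\Lambda\in C(p,q)$ there is $U\in O_2(\mathbb R)$ with $\Lambda=\sqrt{\det(\Lambda)/p}\,U\Lambda_{p,q}$, so that $\frac{\det(\Lambda)}{p}Q_{p,q}(x,y)$ is the norm form of $\Lambda$ with respect to a minimal basis; (5) for every $\Lambda\in C(p,q)$ and $\Re(s)>1$, $E_\Lambda(s)=\left(\frac{p}{\det\Lambda}\right)^s\sum'_{(x,y)\in\mathbb Z^2}Q_{p,q}(x,y)^{-s}$, and hence for each real $s>1$, $\Lambda_{p,q}$ maximizes $E_\Lambda(s)$ over $\Lambda\in C(p,q)$. Such a lattice $\Lambda_{p,q}$ is unique up to rotation by an orthogonal matrix with rational entries.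
   Context: All lattices are full-rank lattices in $\mathbb R^2$. For a lattice $\Lambda$, $|\Lambda|=\min_{x\in\Lambda\setminus\{0\}}\|x\|$ (Euclidean norm) and $S(\Lambda)=\{x\in\Lambda:\|x\|=|\Lambda|\}$; $\Lambda$ is well-rounded (WR) if $S(\Lambda)$ spans $\mathbb R^2$. $\mathrm{WR}(\mathbb Z^2)$ is the set of full-rank WR sublattices of $\mathbb Z^2$. For a WR lattice $\Lambda$, $\theta(\Lambda)\in[\pi/3,\pi/2]$ is the angle between two linearly independent minimal vectors chosen so that the angle is at most $\pi/2$; equivalently $\sin\theta(\Lambda)=\det(\Lambda)/|\Lambda|^2$. For $q\in\mathbb Z_{>0}$ let $\mathcal S_q=\{p/q\in\mathbb Q\cap(\sqrt3/2,1):\gcd(p,q)=1,\ \sqrt{q^2-p^2}\in\mathbb Z\}$ and $\mathcal S=\bigcup_{q}\mathcal S_q\cup\{1\}$, where $1$ is written as $p/q$ with $p=q=1$; elements of $\mathcal S$ are written in lowest terms. For $p/q\in\mathcal S$, $C(p,q)=\{\Lambda\in\mathrm{WR}(\mathbb Z^2):\sin\theta(\Lambda)=p/q\}$. The Epstein zeta function of a lattice $\Lambda$ is $E_\Lambda(s)=\sum'_{x\in\Lambda}\|x\|^{-2s}$, where $\sum'$ denotes summation over $(\Lambda\setminus\{0\})/\{\pm1\}$ (similarly $\sum'_{(x,y)\in\mathbb Z^2}$ sums over $(\mathbb Z^2\setminus\{0\})/\{\pm1\}$). *)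

theory Defs
  imports "HOL-Analysis.Analysis"
begin

text \<open>Vectors of R^2 are modelled as pairs real \<times> real (Euclidean norm and inner product).\<close>

definition det2 :: "real \<times> real \<Rightarrow> real \<times> real \<Rightarrow> real" where
  "det2 a b = fst a * snd b - snd a * fst b"

definition lat_gen :: "real \<times> real \<Rightarrow> real \<times> real \<Rightarrow> (real \<times> real) set" where
  "lat_gen a b = {of_int i *\<^sub>R a + of_int j *\<^sub>R b | i j. True}"

definition lattice_basis :: "(real \<times> real) set \<Rightarrow> real \<times> real \<Rightarrow> real \<times> real \<Rightarrow> bool" where
  "lattice_basis L a b \<longleftrightarrow> det2 a b \<noteq> 0 \<and> L = lat_gen a b"

definition is_lattice :: "(real \<times> real) set \<Rightarrow> bool" where
  "is_lattice L \<longleftrightarrow> (\<exists>a b. lattice_basis L a b)"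

definition lat_det :: "(real \<times> real) set \<Rightarrow> real" where
  "lat_det L = (THE d. \<exists>a b. lattice_basis L a b \<and> d = \<bar>det2 a b\<bar>)"

definition lat_min :: "(real \<times> real) set \<Rightarrow> real" where
  "lat_min L = Inf (norm ` (L - {0}))"

definition min_vecs :: "(real \<times> real) set \<Rightarrow> (real \<times> real) set" where
  "min_vecs L = {x \<in> L. norm x = lat_min L}"

definition well_rounded :: "(real \<times> real) set \<Rightarrow> bool" where
  "well_rounded L \<longleftrightarrow> is_lattice L \<and> span (min_vecs L) = UNIV"

text \<open>theta(L): angle in [pi/3, pi/2] between two linearly independent minimal vectors
  (sign chosen so that the angle is at most pi/2).\<close>
definition wr_theta :: "(real \<times> real) set \<Rightarrow> real" where
  "wr_theta L = (THE \<theta>. \<exists>x\<in>min_vecs L. \<exists>y\<in>min_vecs L. det2 x y \<noteq> 0 \<and>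
      \<theta> = arccos (\<bar>x \<bullet> y\<bar> / (norm x * norm y)))"

definition Z2 :: "(real \<times> real) set" where
  "Z2 = {(of_int m, of_int n) | m n. True}"

definition WR_Z2 :: "(real \<times> real) set set" where
  "WR_Z2 = {L. is_lattice L \<and> L \<subseteq> Z2 \<and> well_rounded L}"

definition in_S :: "nat \<Rightarrow> nat \<Rightarrow> bool" where
  "in_S p q \<longleftrightarrow> (p = 1 \<and> q = 1) \<or>
     (0 < p \<and> 0 < q \<and> coprime p q \<and> sqrt 3 / 2 < real p / real q \<and> real p / real q < 1 \<and>
      (\<exists>r::nat. q^2 - p^2 = r^2))"

definition C_set :: "nat \<Rightarrow> nat \<Rightarrow> (real \<times> real) set set" where
  "C_set p q = {L \<in> WR_Z2. sin (wr_theta L) = real p / real q}"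

definition minimal_basis :: "(real \<times> real) set \<Rightarrow> real \<times> real \<Rightarrow> real \<times> real \<Rightarrow> bool" where
  "minimal_basis L a b \<longleftrightarrow> lattice_basis L a b \<and> a \<in> min_vecs L \<and> b \<in> min_vecs L"

definition norm_form :: "real \<times> real \<Rightarrow> real \<times> real \<Rightarrow> real \<Rightarrow> real \<Rightarrow> real" where
  "norm_form a b x y = (norm (x *\<^sub>R a + y *\<^sub>R b))^2"

definition Qpq :: "nat \<Rightarrow> nat \<Rightarrow> real \<Rightarrow> real \<Rightarrow> real" where
  "Qpq p q x y = real q * x^2 + 2 * x * y * sqrt (real q^2 - real p^2) + real q * y^2"

text \<open>Sum over (A - {0}) / {+-1} of an (even) function f: sum over the classes {x, -x}.\<close>
definition sum_pm :: "('a::ab_group_add \<Rightarrow> complex) \<Rightarrow> 'a set \<Rightarrow> complex" where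
  "sum_pm f A = infsum (\<lambda>c. f (SOME x. x \<in> c)) {{x, -x} | x. x \<in> A - {0}}"

definition epstein :: "(real \<times> real) set \<Rightarrow> complex \<Rightarrow> complex" where
  "epstein L s = sum_pm (\<lambda>x. complex_of_real (norm x) powr (- 2 * s)) L"

definition Qpq_zeta :: "nat \<Rightarrow> nat \<Rightarrow> complex \<Rightarrow> complex" where
  "Qpq_zeta p q s = sum_pm (\<lambda>(x::int, y::int). complex_of_real (Qpq p q (of_int x) (of_int y)) powr (- s))
      (UNIV :: (int \<times> int) set)"

end

theory Submission
  imports Defs "HOL-Computational_Algebra.Nth_Powers"
begin

lemma sq_mod4_odd: "odd (x::nat) \<Longrightarrow> x^2 mod 4 = 1"
proof -
  assume "odd x" then obtain k where "x = 2* k+1" by (metis oddE)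
  then have "x^2 = 4*(k^2+k) + 1" by (simp add: power2_eq_square algebra_simps)
  then show ?thesis by simp
qed

lemma sq_mod4_even: "even (x::nat) \<Longrightarrow> x^2 mod 4 = 0"
proof -
  assume "even x" then obtain k where "x = 2* k" by blast
  then have "x^2 = 4* k^2" by (simp add: power2_eq_square algebra_simps)
  then show ?thesis by simp
qed

lemma pyth_core:
  fixes p r q :: nat
  assumes cop: "coprime p q" and odd: "odd p" and eq: "p^2 + r^2 = q^2" and pq: "p < q"
  shows "\<exists>m n::nat. q = m^2 + n^2 \<and> int p = int m^2 - int n^2 \<and> r = 2* m* n"
proof -
  have "odd (p^2)" using odd by simp
  have "even r"
  proof (rule ccontr)
    assume "odd r"
    then have "(p^2 + r^2) mod 4 = 2" using sq_mod4_odd[OF odd] sq_mod4_odd[of r]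
      by (simp add: mod_add_eq[symmetric])
    moreover have "q^2 mod 4 = 0 \<or> q^2 mod 4 = 1" using sq_mod4_odd sq_mod4_even by blast
    ultimately show False using eq by simp
  qed
  then have "even (r^2)" by simp
  then have "odd (q^2)" using eq \<open>odd (p^2)\<close> by (metis even_add)
  then have oq: "odd q" by simp
  from \<open>even r\<close> obtain t where t: "r = 2* t" by (rule evenE)
  define uu where "uu = (q + p) div 2"
  define vv where "vv = (q - p) div 2"
  have uu2: "2* uu = q + p" using oq odd unfolding uu_def by presburger
  have v2: "2* vv = q - p" using oq odd pq unfolding vv_def by presburger
  have upv: "uu + vv = q" using uu2 v2 pq by simp
  have umv: "uu - vv = p" "vv \<le> uu" using uu2 v2 pq by simp_all
  have "int q^2 - int p^2 = int r^2" using eq by (metis add_diff_cancel_left' of_nat_add of_nat_power)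
  then have "(int q + int p) * (int q - int p) = 4 * int t^2" using t
    by (simp add: power2_eq_square algebra_simps)
  moreover have "int q + int p = 2 * int uu" "int q - int p = 2 * int vv" using uu2 v2 pq by linarith+
  ultimately have "int (uu * vv) = int (t^2)" by simp
  then have uv: "uu * vv = t^2" by linarith
  have u0: "uu > 0" using uu2 pq by simp
  have v0: "vv > 0" using v2 pq by simp
  have cuv: "coprime uu vv"
  proof (rule coprimeI)
    fix c assume cu: "c dvd uu" and cv: "c dvd vv"
    then have "c dvd q" using upv by (metis dvd_add)
    moreover have "c dvd p" using cu cv umv by (metis dvd_diff_nat)
    ultimately show "is_unit c" using cop by (metis coprime_common_divisor)
  qed
  have "is_nth_power 2 (uu* vv)" using uv by auto
  then have "is_nth_power 2 uu" "is_nth_power 2 vv"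
    using is_nth_power_mult_coprime_natD[OF cuv _ u0 v0] by auto
  then obtain m n where m: "uu = m^2" and n: "vv = n^2" by (meson is_nth_powerE)
  have "t^2 = (m* n)^2" using uv m n by (simp add: power_mult_distrib)
  then have "t = m* n" by (simp add: power2_eq_iff_nonneg)
  moreover have "int p = int m^2 - int n^2" using umv m n by (metis of_nat_diff of_nat_power)
  ultimately show ?thesis using upv m n t by (intro exI[of _ m] exI[of _ n]) auto
qed

lemma pyth:
  fixes p r q :: nat
  assumes cop: "coprime p q" and eq: "p^2 + r^2 = q^2" and p0: "0 < p" and pq: "p < q"
  shows "\<exists>m n::int. int q = m^2 + n^2 \<and>
     ((int p = m^2 - n^2 \<and> int r = 2* m* n) \<or> (int r = m^2 - n^2 \<and> int p = 2* m* n))"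
proof (cases "odd p")
  case True
  from pyth_core[OF cop True eq pq] obtain m n where
    "q = m^2 + n^2 \<and> int p = int m^2 - int n^2 \<and> r = 2* m* n" by blast
  then show ?thesis by (intro exI[of _ "int m"] exI[of _ "int n"]) auto
next
  case False
  have "odd r"
  proof
    assume "even r"
    then have "even (q^2)" using False eq by (metis even_add even_power zero_less_numeral)
    then have "even q" by simp
    then have "2 dvd gcd p q" using False by simp
    then show False using cop by simp
  qed
  have cop2: "coprime r q"
  proof (rule coprimeI)
    fix c assume cr: "c dvd r" and cq: "c dvd q"
    have "coprime c p" using cq cop by (metis coprime_commute coprime_imp_coprime dvd_trans dvd_refl)
    then have "coprime c (p^2)" by simp
    moreover have "c dvd p^2"
    proof -
      have "p^2 = q^2 - r^2" using eq by simp
      moreover have "c dvd q^2" "c dvd r^2" using cr cq by (auto simp: power2_eq_square)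
      ultimately show ?thesis by (metis dvd_diff_nat)
    qed
    ultimately show "is_unit c" by (metis coprime_absorb_left coprime_commute)
  qed
  have "r < q"
  proof -
    have "r^2 < q^2" using eq p0 proof -
      have "0 < p^2" using p0 by simp
      then show ?thesis using eq by linarith
    qed
    then show ?thesis using power_less_imp_less_base by blast
  qed
  have eq2: "r^2 + p^2 = q^2" using eq by simp
  from pyth_core[OF cop2 \<open>odd r\<close> eq2 \<open>r < q\<close>] obtain m n where
    "q = m^2 + n^2 \<and> int r = int m^2 - int n^2 \<and> p = 2 * m * n" by blast
  then show ?thesis by (intro exI[of _ "int m"] exI[of _ "int n"]) auto
qed

lemma norm_sq_prod: "(norm (x::real\<times>real))^2 = (fst x)^2 + (snd x)^2"
  by (cases x) (simp add: norm_Pair)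

lemma inner_prod2: "(x::real\<times>real) \<bullet> y = fst x * fst y + snd x * snd y"
  by (cases x; cases y) simp

lemma lagrange2: "(x \<bullet> y)^2 + (det2 x y)^2 = (norm x)^2 * (norm (y::real\<times>real))^2"
  unfolding norm_sq_prod inner_prod2 det2_def by (simp add: power2_eq_square algebra_simps)

lemma det2_lin_left: "det2 (a *\<^sub>R u + b *\<^sub>R v) w = a * det2 u w + b * det2 v w"
  unfolding det2_def by (simp add: algebra_simps)

lemma det2_lin_right: "det2 w (a *\<^sub>R u + b *\<^sub>R v) = a * det2 w u + b * det2 w v"
  unfolding det2_def by (simp add: algebra_simps)

lemma det2_self: "det2 u u = 0" unfolding det2_def by simp
lemma det2_swap: "det2 u v = - det2 v u" unfolding det2_def by simp

lemma coords2:
  assumes "det2 a b \<noteq> 0"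
  shows "v = (det2 v b / det2 a b) *\<^sub>R a + (det2 a v / det2 a b) *\<^sub>R b"
proof -
  have "det2 a b * fst v = det2 v b * fst a + det2 a v * fst b"
       "det2 a b * snd v = det2 v b * snd a + det2 a v * snd b"
    unfolding det2_def by (simp_all add: algebra_simps)
  then show ?thesis using assms
    by (cases v) (auto simp: prod_eq_iff field_simps)
qed

lemma indep2:
  assumes "det2 a b \<noteq> 0" "\<alpha> *\<^sub>R a + \<beta> *\<^sub>R b = 0"
  shows "\<alpha> = 0" "\<beta> = 0"
proof -
  have "det2 (\<alpha> *\<^sub>R a + \<beta> *\<^sub>R b) b = 0" "det2 a (\<alpha> *\<^sub>R a + \<beta> *\<^sub>R b) = 0"
    using assms(2) unfolding det2_def by simp_all
  moreover have "det2 (\<alpha> *\<^sub>R a + \<beta> *\<^sub>R b) b = \<alpha> * det2 a b"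
    "det2 a (\<alpha> *\<^sub>R a + \<beta> *\<^sub>R b) = \<beta> * det2 a b"
    unfolding det2_def by (simp_all add: algebra_simps)
  ultimately show "\<alpha> = 0" "\<beta> = 0" using assms(1) by simp_all
qed

lemma inner_comb:
  "(\<alpha> *\<^sub>R a + \<beta> *\<^sub>R b) \<bullet> (\<gamma> *\<^sub>R a + \<delta> *\<^sub>R b) =
     \<alpha> * \<gamma> * (a \<bullet> a) + (\<alpha> * \<delta> + \<beta> * \<gamma>) * (a \<bullet> b) + \<beta> * \<delta> * (b \<bullet> (b::real\<times>real))"
  by (simp add: inner_add_left inner_add_right inner_commute algebra_simps)

lemma norm_comb:
  "(norm (\<alpha> *\<^sub>R a + \<beta> *\<^sub>R b))^2 =
     \<alpha>^2 * (a \<bullet> a) + 2 * \<alpha> * \<beta> * (a \<bullet> b) + \<beta>^2 * (b \<bullet> (b::real\<times>real))"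
  by (simp only: power2_norm_eq_inner inner_comb) (simp add: power2_eq_square algebra_simps)

lemma lat_gen_mem: "of_int i *\<^sub>R a + of_int j *\<^sub>R b \<in> lat_gen a b"
  unfolding lat_gen_def by blast

lemma lat_gen_closed:
  assumes "u \<in> lat_gen a b" "v \<in> lat_gen a b"
  shows "of_int i *\<^sub>R u + of_int j *\<^sub>R v \<in> lat_gen a b"
proof -
  obtain i1 j1 where u: "u = of_int i1 *\<^sub>R a + of_int j1 *\<^sub>R b" using assms(1) unfolding lat_gen_def by blast
  obtain i2 j2 where v: "v = of_int i2 *\<^sub>R a + of_int j2 *\<^sub>R b" using assms(2) unfolding lat_gen_def by blast
  have "of_int i *\<^sub>R u + of_int j *\<^sub>R v = of_int (i*i1 + j*i2) *\<^sub>R a + of_int (i*j1+j*j2) *\<^sub>R b"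
    unfolding u v by (simp add: algebra_simps scaleR_add_right)
  then show ?thesis using lat_gen_mem by metis
qed

lemma lat_gen_a: "a \<in> lat_gen a b" using lat_gen_mem[of 1 a 0 b] by simp
lemma lat_gen_b: "b \<in> lat_gen a b" using lat_gen_mem[of 0 a 1 b] by simp
lemma lat_gen_0: "0 \<in> lat_gen a b" using lat_gen_mem[of 0 a 0 b] by simp

lemma lat_gen_minus: "u \<in> lat_gen a b \<Longrightarrow> - u \<in> lat_gen a b"
  using lat_gen_closed[of u a b u "-1" 0] by simp

lemma lat_gen_diff: "u \<in> lat_gen a b \<Longrightarrow> v \<in> lat_gen a b \<Longrightarrow> u - v \<in> lat_gen a b"
  using lat_gen_closed[of u a b v 1 "-1"] by simp

lemma lat_gen_sub:
  assumes "x \<in> lat_gen a b" "y \<in> lat_gen a b"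
  shows "lat_gen x y \<subseteq> lat_gen a b"
  using lat_gen_closed[OF assms] unfolding lat_gen_def[of x y] by blast

lemma lat_gen_neg2: "lat_gen x (-y) = lat_gen x y"
proof -
  have "lat_gen x (-y) \<subseteq> lat_gen x y"
    by (rule lat_gen_sub[OF lat_gen_a lat_gen_minus[OF lat_gen_b]])
  moreover have "lat_gen x y \<subseteq> lat_gen x (-y)"
    using lat_gen_sub[OF lat_gen_a lat_gen_minus[OF lat_gen_b], of x "-y"] by simp
  ultimately show ?thesis by blast
qed

lemma det_of_members:
  assumes "c \<in> lat_gen a b" "d \<in> lat_gen a b"
  shows "\<exists>n::int. det2 c d = of_int n * det2 a b"
proof -
  obtain i1 j1 where u: "c = of_int i1 *\<^sub>R a + of_int j1 *\<^sub>R b" using assms(1) unfolding lat_gen_def by blast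
  obtain i2 j2 where v: "d = of_int i2 *\<^sub>R a + of_int j2 *\<^sub>R b" using assms(2) unfolding lat_gen_def by blast
  have "det2 c d = of_int (i1*j2 - j1*i2) * det2 a b"
    unfolding u v det2_def by (simp add: algebra_simps)
  then show ?thesis by blast
qed

lemma basis_det_eq:
  assumes "lattice_basis L a b" "lattice_basis L c d"
  shows "\<bar>det2 a b\<bar> = \<bar>det2 c d\<bar>"
proof -
  from assms have L1: "L = lat_gen a b" and L2: "L = lat_gen c d" and d1: "det2 a b \<noteq> 0" and d2: "det2 c d \<noteq> 0"
    unfolding lattice_basis_def by auto
  obtain n where n: "det2 c d = of_int n * det2 a b"
    using det_of_members[of c a b d] L1 L2 lat_gen_a lat_gen_b by metis
  obtain m where m: "det2 a b = of_int m * det2 c d"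
    using det_of_members[of a c d b] L1 L2 lat_gen_a lat_gen_b by metis
  have "(of_int (m * n) - 1) * det2 a b = 0" using n m by (simp add: algebra_simps)
  then have "of_int (m*n) = (1::real)" using d1 by simp
  then have "m * n = 1" by linarith
  then have "\<bar>n\<bar> = 1" using zmult_eq_1_iff by auto
  then have "\<bar>of_int n::real\<bar> = 1" by linarith
  then show ?thesis using n by (simp add: abs_mult)
qed

lemma lat_det_eq:
  assumes "lattice_basis L a b"
  shows "lat_det L = \<bar>det2 a b\<bar>"
  unfolding lat_det_def
proof (rule the_equality)
  show "\<exists>a' b'. lattice_basis L a' b' \<and> \<bar>det2 a b\<bar> = \<bar>det2 a' b'\<bar>" using assms by blast
next
  fix d assume "\<exists>a' b'. lattice_basis L a' b' \<and> d = \<bar>det2 a' b'\<bar>"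
  then show "d = \<bar>det2 a b\<bar>" using basis_det_eq assms by metis
qed

lemma Z2_mem: "v \<in> Z2 \<longleftrightarrow> (\<exists>m n::int. v = (of_int m, of_int n))"
  unfolding Z2_def by blast

lemma Z2_normsq: "v \<in> Z2 \<Longrightarrow> \<exists>k::nat. (norm v)^2 = of_nat k"
proof -
  assume "v \<in> Z2"
  then obtain m n :: int where v: "v = (of_int m, of_int n)" unfolding Z2_def by blast
  have "(norm v)^2 = of_int (m^2 + n^2)" unfolding v norm_sq_prod by simp
  also have "\<dots> = of_nat (nat (m^2+n^2))" by simp
  finally show ?thesis by blast
qed

lemma lat_min_Z2:
  assumes "is_lattice L" "L \<subseteq> Z2"
  shows "\<exists>x\<in>L - {0}. norm x = lat_min L \<and> (\<forall>y\<in>L-{0}. norm x \<le> norm y)" "lat_min L \<ge> 1"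
proof -
  obtain a b where ab: "lattice_basis L a b" using assms(1) unfolding is_lattice_def by blast
  have "a \<noteq> 0" using ab unfolding lattice_basis_def det2_def by auto
  moreover have "a \<in> L" using ab lat_gen_a unfolding lattice_basis_def by auto
  ultimately have "a \<in> L - {0}" by simp
  define f where "f = (\<lambda>v::real\<times>real. nat \<lfloor>(norm v)^2\<rfloor>)"
  have fv: "real (f v) = (norm v)^2" if "v \<in> L" for v
  proof -
    have "v \<in> Z2" using that assms(2) by auto
    then obtain k where "(norm v)^2 = of_nat k" using Z2_normsq by blast
    then show ?thesis unfolding f_def by simp
  qed
  obtain x where x: "x \<in> L - {0}" "\<forall>y. y \<in> L - {0} \<longrightarrow> f x \<le> f y"
    using ex_has_least_nat[of "\<lambda>v. v \<in> L - {0}" a f] \<open>a \<in> L - {0}\<close> by blast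
  have le: "norm x \<le> norm y" if "y \<in> L - {0}" for y
  proof -
    have "(norm x)^2 \<le> (norm y)^2" using x that fv by (metis DiffD1 of_nat_le_iff)
    then show ?thesis by (simp add: power2_le_iff_abs_le)
  qed
  have inf: "lat_min L = norm x" unfolding lat_min_def
    by (rule cInf_eq_minimum) (use x le in auto)
  show "\<exists>x\<in>L - {0}. norm x = lat_min L \<and> (\<forall>y\<in>L-{0}. norm x \<le> norm y)"
  proof (rule bexI[of _ x])
    show "x \<in> L - {0}" using x(1) .
    show "norm x = lat_min L \<and> (\<forall>y\<in>L-{0}. norm x \<le> norm y)"
      using inf le by simp
  qed
  have "real (f x) = (norm x)^2" using fv x by auto
  moreover have "(norm x)^2 > 0" using x by auto
  ultimately have "real (f x) > 0" by linarith
  then have "f x > 0" by simp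
  then have "real (f x) \<ge> 1" by simp
  then have "(norm x)^2 \<ge> 1" using \<open>real (f x) = (norm x)^2\<close> by simp
  then have "1 \<le> norm x"
  proof -
    assume h: "(norm x)^2 \<ge> 1"
    show "1 \<le> norm x"
    proof (rule ccontr)
      assume "\<not> 1 \<le> norm x"
      then have "norm x * norm x < 1 * 1" by (intro mult_strict_mono) auto
      then show False using h by (simp add: power2_eq_square)
    qed
  qed
  then show "lat_min L \<ge> 1" using inf by simp
qed

lemma wr_indep:
  assumes "well_rounded L" "lat_min L > 0"
  shows "\<exists>x y. x \<in> min_vecs L \<and> y \<in> min_vecs L \<and> det2 x y \<noteq> 0"
proof (rule ccontr)
  assume H: "\<not> ?thesis"
  have sp: "span (min_vecs L) = UNIV" using assms(1) unfolding well_rounded_def by simp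
  have "min_vecs L \<noteq> {}"
  proof
    assume "min_vecs L = {}"
    then have "span (min_vecs L) = {0}" by simp
    then have "(1::real, 0::real) = 0" using sp by (metis UNIV_I singletonD)
    then show False by (simp add: zero_prod_def)
  qed
  then obtain x0 where x0: "x0 \<in> min_vecs L" by blast
  have "norm x0 = lat_min L" using x0 unfolding min_vecs_def by simp
  then have "x0 \<noteq> 0" using assms(2) by auto
  define S where "S = {v. det2 x0 v = 0}"
  have subS: "subspace S" unfolding subspace_def S_def det2_def by (auto simp: algebra_simps)
  have "min_vecs L \<subseteq> S" using H x0 unfolding S_def by blast
  then have "span (min_vecs L) \<subseteq> S" using subS by (simp add: span_minimal)
  moreover have "(- snd x0, fst x0) \<notin> S"
  proof
    assume "(- snd x0, fst x0) \<in> S"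
    then have "(fst x0)^2 + (snd x0)^2 = 0" unfolding S_def det2_def by (simp add: power2_eq_square)
    then have "fst x0 = 0" "snd x0 = 0" by (simp_all add: sum_power2_eq_zero_iff)
    then show False using \<open>x0 \<noteq> 0\<close> by (simp add: prod_eq_iff)
  qed
  ultimately show False using sp by auto
qed

lemma small_comb:
  fixes m t A B :: real
  assumes m: "m > 0" and t: "\<bar>t\<bar> < m^2" and A: "\<bar>A\<bar> \<le> 1/2" and B: "\<bar>B\<bar> \<le> 1/2"
  shows "A^2 * m^2 + 2 * A * B * t + B^2 * m^2 < m^2"
proof (cases "A * B = 0")
  case True
  then have "A = 0 \<or> B = 0" by simp
  moreover have "A^2 \<le> (1/2)^2" "B^2 \<le> (1/2)^2"
    using A B abs_le_square_iff[of A "1/2"] abs_le_square_iff[of B "1/2"] by simp_all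
  moreover have m2: "m^2 > 0" using m by simp
  ultimately have "A^2 * m^2 \<le> (1/4) * m^2" "B^2 * m^2 \<le> (1/4) * m^2"
    by (simp_all add: power_divide mult_right_mono)
  then show ?thesis using True m2 \<open>A = 0 \<or> B = 0\<close> by auto
next
  case False
  have "2 * A * B * t \<le> \<bar>2 * A * B * t\<bar>" by (rule abs_ge_self)
  also have "\<dots> = 2 * \<bar>A\<bar> * \<bar>B\<bar> * \<bar>t\<bar>" by (simp add: abs_mult)
  also have "\<dots> < 2 * \<bar>A\<bar> * \<bar>B\<bar> * m^2"
    using False t by (simp add: abs_mult)
  finally have "A^2 * m^2 + 2 * A * B * t + B^2 * m^2 < (\<bar>A\<bar> + \<bar>B\<bar>)^2 * m^2"
    by (simp add: power2_eq_square algebra_simps)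
  also have "\<dots> \<le> 1 * m^2"
  proof (rule mult_right_mono)
    have "\<bar>A\<bar> + \<bar>B\<bar> \<le> 1" using A B by simp
    then show "(\<bar>A\<bar> + \<bar>B\<bar>)^2 \<le> 1" by (simp add: power_le_one)
  qed simp
  finally show ?thesis by simp
qed

lemma min_basis:
  assumes lat: "is_lattice L" and Z: "L \<subseteq> Z2" and x: "x \<in> min_vecs L" and y: "y \<in> min_vecs L"
    and d: "det2 x y \<noteq> 0"
  shows "lattice_basis L x y"
proof -
  obtain a b where ab: "lattice_basis L a b" using lat unfolding is_lattice_def by blast
  then have L: "L = lat_gen a b" unfolding lattice_basis_def by simp
  obtain z0 where z0: "z0\<in>L - {0}" "norm z0 = lat_min L" "\<forall>y\<in>L-{0}. norm z0 \<le> norm y"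
    using lat_min_Z2(1)[OF lat Z] by blast
  define m where "m = lat_min L"
  have m0: "m > 0" using lat_min_Z2(2)[OF lat Z] unfolding m_def by simp
  have mle: "m \<le> norm z" if "z \<in> L" "z \<noteq> 0" for z using z0 that unfolding m_def by auto
  have xL: "x \<in> L" and yL: "y \<in> L" and nx: "norm x = m" and ny: "norm y = m"
    using x y unfolding min_vecs_def m_def by auto
  have xx: "x \<bullet> x = m^2" "y \<bullet> y = m^2" using nx ny by (simp_all add: power2_norm_eq_inner[symmetric])
  have "(x \<bullet> y)^2 + (det2 x y)^2 = m^2 * m^2" using lagrange2[of x y] nx ny by simp
  moreover have "(det2 x y)^2 > 0" using d by simp
  ultimately have "(x \<bullet> y)^2 < (m^2)^2" by (simp add: power2_eq_square)
  then have t: "\<bar>x \<bullet> y\<bar> < m^2" using abs_le_square_iff[of "m^2" "x \<bullet> y"] by (simp add: not_le[symmetric])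
  have xyL: "lat_gen x y \<subseteq> L" using lat_gen_sub xL yL L by simp
  moreover have "L \<subseteq> lat_gen x y"
  proof
    fix z assume zL: "z \<in> L"
    define \<alpha> where "\<alpha> = det2 z y / det2 x y"
    define \<beta> where "\<beta> = det2 x z / det2 x y"
    have z: "z = \<alpha> *\<^sub>R x + \<beta> *\<^sub>R y" unfolding \<alpha>_def \<beta>_def using coords2[OF d] .
    define i where "i = round \<alpha>"
    define j where "j = round \<beta>"
    define z' where "z' = z - (of_int i *\<^sub>R x + of_int j *\<^sub>R y)"
    have "of_int i *\<^sub>R x + of_int j *\<^sub>R y \<in> L" using lat_gen_closed xL yL L by simp
    then have z'L: "z' \<in> L" unfolding z'_def using lat_gen_diff zL L by simp
    have z'eq: "z' = (\<alpha> - of_int i) *\<^sub>R x + (\<beta> - of_int j) *\<^sub>R y"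
      unfolding z'_def z by (simp add: algebra_simps)
    have A: "\<bar>\<alpha> - of_int i\<bar> \<le> 1/2" unfolding i_def using of_int_round_abs_le[of \<alpha>] by linarith
    have B: "\<bar>\<beta> - of_int j\<bar> \<le> 1/2" unfolding j_def using of_int_round_abs_le[of \<beta>] by linarith
    have "z' = 0"
    proof (rule ccontr)
      assume "z' \<noteq> 0"
      then have "m \<le> norm z'" using mle z'L by simp
      then have "m^2 \<le> (norm z')^2" using m0 by (simp add: power_mono)
      also have "(norm z')^2 = (\<alpha> - of_int i)^2 * m^2 + 2 * (\<alpha> - of_int i) * (\<beta> - of_int j) * (x \<bullet> y) + (\<beta> - of_int j)^2 * m^2"
        unfolding z'eq norm_comb xx by simp
      also have "\<dots> < m^2" by (rule small_comb[OF m0 t A B])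
      finally show False by simp
    qed
    then have "z = of_int i *\<^sub>R x + of_int j *\<^sub>R y" unfolding z'_def by simp
    then show "z \<in> lat_gen x y" using lat_gen_mem by metis
  qed
  ultimately show ?thesis unfolding lattice_basis_def using d by blast
qed

lemma WR_Z2_D:
  assumes "L \<in> WR_Z2"
  shows "is_lattice L" "L \<subseteq> Z2" "well_rounded L" "lat_min L \<ge> 1"
  using assms lat_min_Z2(2)[of L] unfolding WR_Z2_def by auto

lemma minvec_pair:
  assumes "L \<in> WR_Z2" "x \<in> min_vecs L" "y \<in> min_vecs L" "det2 x y \<noteq> 0"
  shows "lattice_basis L x y" "lat_det L = \<bar>det2 x y\<bar>" "norm x = lat_min L" "norm y = lat_min L"
    "\<bar>x \<bullet> y\<bar> = sqrt ((lat_min L)^4 - (lat_det L)^2)"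
proof -
  show lb: "lattice_basis L x y" using min_basis WR_Z2_D[OF assms(1)] assms(2-4) by blast
  show D: "lat_det L = \<bar>det2 x y\<bar>" using lat_det_eq[OF lb] .
  show nx: "norm x = lat_min L" "norm y = lat_min L" using assms(2,3) unfolding min_vecs_def by auto
  have "(x \<bullet> y)^2 = (lat_min L)^4 - (lat_det L)^2"
    using lagrange2[of x y] nx D by (simp add: power2_eq_square power4_eq_xxxx)
  then show "\<bar>x \<bullet> y\<bar> = sqrt ((lat_min L)^4 - (lat_det L)^2)"
    by (metis real_sqrt_abs)
qed

lemma wr_theta_sin:
  assumes L: "L \<in> WR_Z2"
  shows "sin (wr_theta L) = lat_det L / (lat_min L)^2"
proof -
  define m where "m = lat_min L"
  define D where "D = lat_det L"
  have m1: "m \<ge> 1" using WR_Z2_D[OF L] unfolding m_def by simp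
  obtain x0 y0 where xy0: "x0 \<in> min_vecs L" "y0 \<in> min_vecs L" "det2 x0 y0 \<noteq> 0"
    using wr_indep[of L] WR_Z2_D[OF L] by force
  note P0 = minvec_pair[OF L xy0]
  define c where "c = sqrt (m^4 - D^2) / m^2"
  have th: "wr_theta L = arccos c"
    unfolding wr_theta_def
  proof (rule the_equality)
    show "\<exists>x\<in>min_vecs L. \<exists>y\<in>min_vecs L. det2 x y \<noteq> 0 \<and> arccos c = arccos (\<bar>x \<bullet> y\<bar> / (norm x * norm y))"
      using xy0 P0 unfolding c_def m_def D_def by (intro bexI[of _ x0] bexI[of _ y0]) (auto simp: power2_eq_square)
  next
    fix \<theta> assume "\<exists>x\<in>min_vecs L. \<exists>y\<in>min_vecs L. det2 x y \<noteq> 0 \<and> \<theta> = arccos (\<bar>x \<bullet> y\<bar> / (norm x * norm y))"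
    then obtain x y where xy: "x \<in> min_vecs L" "y \<in> min_vecs L" "det2 x y \<noteq> 0"
      and t: "\<theta> = arccos (\<bar>x \<bullet> y\<bar> / (norm x * norm y))" by blast
    note P = minvec_pair[OF L xy]
    show "\<theta> = arccos c" using t P unfolding c_def m_def D_def by (simp add: power2_eq_square)
  qed
  have tsq: "(x0 \<bullet> y0)^2 = m^4 - D^2"
    using lagrange2[of x0 y0] P0 unfolding m_def D_def by (simp add: power2_eq_square power4_eq_xxxx)
  have nonneg: "m^4 - D^2 \<ge> 0" using tsq by (metis zero_le_power2)
  have m2: "m^2 > 0" using m1 by simp
  have c0: "c \<ge> 0" unfolding c_def using nonneg m2 by simp
  have csq: "c^2 = (m^4 - D^2) / (m^2)^2" unfolding c_def using nonneg by (simp add: power_divide)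
  have "(m^2)^2 = m^4" by simp
  then have c2: "c^2 = 1 - D^2 / (m^2)^2" using csq m2 by (simp add: field_simps)
  have "c^2 \<le> 1" using c2 by (simp add: divide_nonneg_nonneg)
  then have c1: "c \<le> 1" using c0 by (simp add: power_le_one_iff abs_square_le_1)
  have "sin (arccos c) = sqrt (1 - c^2)" using c0 c1 by (intro sin_arccos) auto
  also have "\<dots> = sqrt ((D / m^2)^2)" using c2 by (simp add: power_divide)
  also have "\<dots> = D / m^2" using P0(2) m2 unfolding D_def by simp
  finally show ?thesis using th unfolding m_def D_def by simp
qed

lemma inS_facts:
  assumes "in_S p q"
  shows "0 < p" "0 < q" "p \<le> q \<and> 3 * (real q)^2 < 4 * (real p)^2" "coprime p q"
    "\<exists>\<rho>::nat. q^2 - p^2 = \<rho>^2"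
proof -
  show "0 < p" "0 < q" "coprime p q" using assms unfolding in_S_def by auto
  show "\<exists>\<rho>::nat. q^2 - p^2 = \<rho>^2" using assms unfolding in_S_def by (auto intro: exI[of _ 0])
  have "p = 1 \<and> q = 1 \<or> (0 < q \<and> sqrt 3 / 2 < real p / real q \<and> real p / real q < 1)"
    using assms unfolding in_S_def by auto
  then show "p \<le> q \<and> 3 * (real q)^2 < 4 * (real p)^2"
  proof (elim disjE)
    assume h: "0 < q \<and> sqrt 3 / 2 < real p / real q \<and> real p / real q < 1"
    then have "real p < real q" by (auto simp: divide_less_eq_1)
    then have "p \<le> q" by simp
    have "sqrt 3 < 2 * real p / real q" using h by (simp add: mult.commute)
    then have "sqrt 3 * real q < 2 * real p" using h by (simp add: less_divide_eq)
    moreover have "0 \<le> sqrt 3 * real q" by simp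
    ultimately have "(sqrt 3 * real q)^2 < (2 * real p)^2" by (intro power_strict_mono) auto
    then have "3 * (real q)^2 < 4 * (real p)^2" by (simp add: power_mult_distrib)
    then show ?thesis using \<open>p \<le> q\<close> by simp
  qed auto
qed

lemma Z2_vec: "v \<in> Z2 \<Longrightarrow> \<exists>a1 a2::int. v = (of_int a1, of_int a2)"
  unfolding Z2_def by blast

lemma C_struct:
  assumes S: "in_S p q" and L: "L \<in> C_set p q"
  shows "\<exists>k::nat. k \<ge> 1 \<and> lat_det L = real k * real p \<and> lat_min L = sqrt (real k * real q) \<and>
    (\<exists>x y. minimal_basis L x y \<and> x \<bullet> x = real k * real q \<and> y \<bullet> y = real k * real q
        \<and> x \<bullet> y = real k * sqrt ((real q)^2 - (real p)^2))"
proof -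
  note F = inS_facts[OF S]
  have LW: "L \<in> WR_Z2" and sinL: "sin (wr_theta L) = real p / real q" using L unfolding C_set_def by auto
  define m where "m = lat_min L"
  define D where "D = lat_det L"
  have m1: "m \<ge> 1" using WR_Z2_D[OF LW] unfolding m_def by simp
  obtain x y0 where xy0: "x \<in> min_vecs L" "y0 \<in> min_vecs L" "det2 x y0 \<noteq> 0"
    using wr_indep[of L] WR_Z2_D[OF LW] by force
  note P0 = minvec_pair[OF LW xy0]
  define y where "y = (if x \<bullet> y0 \<ge> 0 then y0 else - y0)"
  have Lgen: "L = lat_gen x y0" using P0(1) unfolding lattice_basis_def by simp
  have "-y0 \<in> min_vecs L" using xy0(2) lat_gen_minus[of y0 x y0] Lgen unfolding min_vecs_def by auto
  then have y: "y \<in> min_vecs L" using xy0(2) unfolding y_def by auto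
  have dy: "det2 x y \<noteq> 0" using xy0(3) unfolding y_def det2_def by auto
  have xy_nn: "x \<bullet> y = \<bar>x \<bullet> y0\<bar>" unfolding y_def by auto
  note P = minvec_pair[OF LW xy0(1) y dy]
  have mb: "minimal_basis L x y" unfolding minimal_basis_def using P(1) xy0(1) y by simp
  have "x \<in> Z2" "y \<in> Z2" using WR_Z2_D(2)[OF LW] P(1) lat_gen_a lat_gen_b
    unfolding lattice_basis_def by blast+
  then obtain a1 a2 b1 b2 :: int where xv: "x = (of_int a1, of_int a2)" and yv: "y = (of_int b1, of_int b2)"
    using Z2_vec by metis
  define M where "M = a1^2 + a2^2"
  define Di where "Di = \<bar>a1 * b2 - a2 * b1\<bar>"
  have mM: "m^2 = of_int M" using P(3) norm_sq_prod[of x] unfolding m_def M_def xv by simp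
  have DD: "D = of_int Di" using P(2) unfolding D_def Di_def xv yv det2_def by simp
  have "of_int (a1 * b2 - a2 * b1) \<noteq> (0::real)" using dy unfolding xv yv det2_def by simp
  then have "Di \<noteq> 0" unfolding Di_def by (metis abs_eq_0 of_int_0)
  then have Dipos: "Di > 0" unfolding Di_def by simp
  have "D / m^2 = real p / real q" using wr_theta_sin[OF LW] sinL unfolding m_def D_def by simp
  then have "real q * D = real p * m^2" using F(2) m1 by (simp add: field_simps)
  then have eqi: "int q * Di = int p * M" using mM DD by (metis of_int_eq_iff of_int_mult of_int_of_nat_eq)
  have cop: "coprime (int p) (int q)" using F(4) by simp
  have "int p dvd int q * Di" using eqi by simp
  then have "int p dvd Di" using cop by (simp add: coprime_dvd_mult_right_iff)
  then obtain k0 where k0: "Di = int p * k0" by blast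
  have "int q * int p * k0 = int p * M" using eqi k0 by (simp add: algebra_simps)
  then have Mk: "M = int q * k0" using F(1) by simp
  have "k0 > 0" using Dipos k0 F(1) by (simp add: zero_less_mult_iff)
  define k where "k = nat k0"
  have kk: "real k = of_int k0" "k \<ge> 1" unfolding k_def using \<open>k0 > 0\<close> by auto
  have Dk: "D = real k * real p" unfolding DD k0 kk by simp
  have mk: "m^2 = real k * real q" unfolding mM Mk kk by simp
  have "m = sqrt (m^2)" using m1 by simp
  then have msq: "m = sqrt (real k * real q)" using mk by simp
  have xx: "x \<bullet> x = real k * real q" "y \<bullet> y = real k * real q"
    using P(3,4) mk unfolding m_def by (simp_all add: power2_norm_eq_inner[symmetric])
  have "x \<bullet> y = sqrt (m^4 - D^2)" using P(5) xy_nn unfolding m_def D_def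
    by simp
  also have "m^4 - D^2 = (real k)^2 * ((real q)^2 - (real p)^2)"
    using mk Dk by (simp add: power4_eq_xxxx power2_eq_square algebra_simps)
  also have "sqrt \<dots> = real k * sqrt ((real q)^2 - (real p)^2)" by (simp add: real_sqrt_mult)
  finally have xy: "x \<bullet> y = real k * sqrt ((real q)^2 - (real p)^2)" .
  show ?thesis using kk(2) Dk msq mb xx xy unfolding m_def D_def by blast
qed

lemma Z2I: "(of_int m, of_int n) \<in> Z2" unfolding Z2_def by blast

lemma Lam_basis:
  assumes S: "in_S p q"
  shows "\<exists>a b. a \<in> Z2 \<and> b \<in> Z2 \<and> a \<bullet> a = real q \<and> b \<bullet> b = real q \<and>
     a \<bullet> b = sqrt ((real q)^2 - (real p)^2) \<and> \<bar>det2 a b\<bar> = real p"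
proof (cases "p = 1 \<and> q = 1")
  case True
  have "(1::real,0::real) \<in> Z2" "(0::real,1::real) \<in> Z2" using Z2I[of 1 0] Z2I[of 0 1] by simp_all
  then show ?thesis using True
    by (intro exI[of _ "(1::real,0::real)"] exI[of _ "(0::real,1::real)"]) (simp add: det2_def)
next
  case False
  then have h: "0 < p" "0 < q" "coprime p q" "real p / real q < 1" and "\<exists>r::nat. q^2 - p^2 = r^2"
    using S unfolding in_S_def by auto
  then obtain \<rho> :: nat where rho: "q^2 - p^2 = \<rho>^2" by blast
  have pq: "p < q" using h by (simp add: divide_less_eq_1)
  then have "p^2 < q^2" by (simp add: power_strict_mono)
  then have eq: "p^2 + \<rho>^2 = q^2" using rho by simp
  have sq: "sqrt ((real q)^2 - (real p)^2) = real \<rho>"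
  proof -
    have "real (p^2 + \<rho>^2) = real (q^2)" using eq by simp
    then have "(real q)^2 - (real p)^2 = (real \<rho>)^2" by simp
    then show ?thesis by simp
  qed
  obtain m n :: int where mn: "int q = m^2 + n^2"
    and cases: "(int p = m^2 - n^2 \<and> int \<rho> = 2*m*n) \<or> (int \<rho> = m^2 - n^2 \<and> int p = 2*m*n)"
    using pyth[OF h(3) eq h(1) pq] by blast
  have qr: "real q = (of_int m)^2 + (of_int n)^2" using arg_cong[OF mn, of real_of_int] by simp
  from cases show ?thesis
  proof
    assume c: "int p = m^2 - n^2 \<and> int \<rho> = 2*m*n"
    have pr: "real p = (of_int m)^2 - (of_int n)^2" "real \<rho> = 2 * of_int m * of_int n"
      using arg_cong[OF conjunct1[OF c], of real_of_int] arg_cong[OF conjunct2[OF c], of real_of_int] by simp_all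
    show ?thesis
      by (rule exI[of _ "(of_int m, of_int n)"], rule exI[of _ "(of_int n, of_int m)"])
        (use qr pr sq Z2I in \<open>auto simp: det2_def power2_eq_square\<close>)
  next
    assume c: "int \<rho> = m^2 - n^2 \<and> int p = 2*m*n"
    have pr: "real \<rho> = (of_int m)^2 - (of_int n)^2" "real p = 2 * of_int m * of_int n"
      using arg_cong[OF conjunct1[OF c], of real_of_int] arg_cong[OF conjunct2[OF c], of real_of_int] by simp_all
    have z: "(of_int m, - of_int n) \<in> Z2" using Z2I[of m "-n"] by simp
    show ?thesis
      by (rule exI[of _ "(of_int m, - of_int n)"], rule exI[of _ "(of_int m, of_int n)"])
        (use qr pr sq z Z2I in \<open>auto simp: det2_def power2_eq_square\<close>)
  qed
qed

lemma quad_ge: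
  fixes i j :: int and q r :: real
  assumes "(i, j) \<noteq> (0, 0)" "0 \<le> r" "2 * r \<le> q"
  shows "q * (of_int i^2 + of_int j^2) + 2 * r * of_int i * of_int j \<ge> q"
proof -
  have q0: "q \<ge> 0" using assms by simp
  have "i^2 > 0 \<or> j^2 > 0" using assms(1) by auto
  then have ij1: "i^2 + j^2 \<ge> 1" by (smt (verit) zero_le_power2)
  then have ij1r: "of_int i^2 + of_int j^2 \<ge> (1::real)"
    using of_int_le_iff[of 1 "i^2+j^2", where 'a=real] by simp
  show ?thesis
  proof (cases "i * j \<ge> 0")
    case True
    have "q * 1 \<le> q * (of_int i^2 + of_int j^2)"
      using ij1r q0 by (intro mult_left_mono) simp_all
    moreover have "real_of_int (i * j) \<ge> 0" using True by (simp only: of_int_0_le_iff)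
    then have "0 \<le> (2 * r) * (of_int i * of_int j)" using assms(2) by (simp del: of_int_mult add: of_int_mult[symmetric])
    ultimately show ?thesis by (simp add: algebra_simps)
  next
    case False
    have X: "i^2 + i*j + j^2 \<ge> 1"
    proof -
      have "2 * (i^2 + i*j + j^2) = i^2 + j^2 + (i+j)^2" by (simp add: power2_eq_square algebra_simps)
      then have "2 * (i^2 + i*j + j^2) \<ge> 1" using ij1 by (smt (verit) zero_le_power2)
      moreover have "\<And>Y::int. 1 \<le> 2 * Y \<Longrightarrow> 1 \<le> Y" by linarith
      ultimately show ?thesis by blast
    qed
    then have Xr: "of_int i^2 + of_int i * of_int j + of_int j^2 \<ge> (1::real)"
      using of_int_le_iff[of 1 "i^2 + i*j + j^2", where 'a=real] by simp
    have "real_of_int (i * j) < 0" using False by (simp only: of_int_less_0_iff not_le)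
    then have ijn: "of_int i * of_int j \<le> (0::real)" by (simp del: of_int_mult add: of_int_mult[symmetric])
    have "(2 * r) * (of_int i * of_int j) \<ge> q * (of_int i * of_int j)"
      by (rule mult_right_mono_neg[OF assms(3) ijn])
    moreover have "q * (of_int i^2 + of_int i * of_int j + of_int j^2) \<ge> q * 1"
      using Xr q0 by (intro mult_left_mono) simp_all
    ultimately show ?thesis by (simp add: algebra_simps)
  qed
qed

lemma rho_facts:
  assumes S: "in_S p q"
  shows "0 \<le> sqrt ((real q)^2 - (real p)^2)" "2 * sqrt ((real q)^2 - (real p)^2) \<le> real q"
    "(sqrt ((real q)^2 - (real p)^2))^2 = (real q)^2 - (real p)^2"
proof -
  note F = inS_facts[OF S]
  have pq: "real p \<le> real q" using conjunct1[OF F(3)] by simp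
  have "(real p)^2 \<le> (real q)^2" using pq by (intro power_mono) auto
  then have nn: "(real q)^2 - (real p)^2 \<ge> 0" by simp
  show "0 \<le> sqrt ((real q)^2 - (real p)^2)" using nn by simp
  show sq: "(sqrt ((real q)^2 - (real p)^2))^2 = (real q)^2 - (real p)^2" using nn by simp
  have "(2 * sqrt ((real q)^2 - (real p)^2))^2 \<le> (real q)^2"
    using sq conjunct2[OF F(3)] by (simp add: power_mult_distrib)
  then show "2 * sqrt ((real q)^2 - (real p)^2) \<le> real q"
    using abs_le_square_iff[of "2 * sqrt ((real q)^2 - (real p)^2)" "real q"] by simp
qed

lemma Lam_props:
  assumes S: "in_S p q" and aZ: "a \<in> Z2" and bZ: "b \<in> Z2" and aa: "a \<bullet> a = real q" and bb: "b \<bullet> b = real q"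
    and ab: "a \<bullet> b = sqrt ((real q)^2 - (real p)^2)" and dab: "\<bar>det2 a b\<bar> = real p"
  shows "lat_gen a b \<in> C_set p q" "lat_min (lat_gen a b) = sqrt (real q)" "lat_det (lat_gen a b) = real p"
    "minimal_basis (lat_gen a b) a b" "\<forall>x y. norm_form a b x y = Qpq p q x y"
proof -
  note F = inS_facts[OF S]
  note R = rho_facts[OF S]
  define \<rho> where "\<rho> = sqrt ((real q)^2 - (real p)^2)"
  define L where "L = lat_gen a b"
  show nf: "\<forall>x y. norm_form a b x y = Qpq p q x y"
    unfolding norm_form_def Qpq_def norm_comb aa bb ab by (simp add: algebra_simps)
  have d: "det2 a b \<noteq> 0" using dab F(1) by auto
  have lb: "lattice_basis L a b" unfolding lattice_basis_def L_def using d by simp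
  have lat: "is_lattice L" using lb unfolding is_lattice_def by blast
  obtain a1 a2 where av: "a = (of_int a1, of_int a2)" using Z2_vec[OF aZ] by blast
  obtain b1 b2 where bv: "b = (of_int b1, of_int b2)" using Z2_vec[OF bZ] by blast
  have sub: "L \<subseteq> Z2"
  proof
    fix z assume "z \<in> L"
    then obtain i j where z: "z = of_int i *\<^sub>R a + of_int j *\<^sub>R b" unfolding L_def lat_gen_def by blast
    have "z = (of_int (i*a1 + j*b1), of_int (i*a2 + j*b2))" unfolding z av bv by simp
    then show "z \<in> Z2" using Z2I[of "i*a1 + j*b1" "i*a2 + j*b2"] by simp
  qed
  have na: "norm a = sqrt (real q)" "norm b = sqrt (real q)"
    using aa bb by (simp_all add: norm_eq_sqrt_inner)
  obtain z0 where z0: "z0 \<in> L - {0}" "norm z0 = lat_min L" "\<forall>y\<in>L-{0}. norm z0 \<le> norm y"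
    using lat_min_Z2(1)[OF lat sub] by blast
  obtain i j where z0v: "z0 = of_int i *\<^sub>R a + of_int j *\<^sub>R b" using z0(1) unfolding L_def lat_gen_def by blast
  have "(i, j) \<noteq> (0, 0)" using z0(1) z0v by auto
  then have "real q \<le> real q * ((of_int i)^2 + (of_int j)^2) + 2 * \<rho> * of_int i * of_int j"
    using quad_ge R(1,2) unfolding \<rho>_def by blast
  also have "\<dots> = (norm z0)^2" unfolding z0v norm_comb aa bb ab \<rho>_def by (simp add: algebra_simps)
  finally have ge: "real q \<le> (norm z0)^2" .
  have "a \<in> L - {0}" using d lat_gen_a unfolding L_def det2_def by auto
  then have "norm z0 \<le> norm a" using z0(3) by blast
  then have "norm z0 \<le> sqrt (real q)" using na by simp
  then have "(norm z0)^2 \<le> real q" by (metis norm_ge_zero of_nat_0_le_iff power_mono real_sqrt_pow2)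
  then have "(norm z0)^2 = real q" using ge by simp
  then have "norm z0 = sqrt (real q)" by (metis norm_ge_zero real_sqrt_unique)
  then have lm: "lat_min L = sqrt (real q)" using z0(2) by simp
  then show "lat_min (lat_gen a b) = sqrt (real q)" unfolding L_def .
  have amin: "a \<in> min_vecs L" "b \<in> min_vecs L" unfolding min_vecs_def using lm na lat_gen_a lat_gen_b L_def by auto
  show "minimal_basis (lat_gen a b) a b" using lb amin unfolding minimal_basis_def L_def by simp
  have sp: "span (min_vecs L) = UNIV"
  proof -
    have "v \<in> span (min_vecs L)" for v
    proof -
      have "v = (det2 v b / det2 a b) *\<^sub>R a + (det2 a v / det2 a b) *\<^sub>R b" using coords2[OF d] .
      moreover have "(det2 v b / det2 a b) *\<^sub>R a + (det2 a v / det2 a b) *\<^sub>R b \<in> span (min_vecs L)"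
        using amin by (intro span_add span_scale span_base)
      ultimately show ?thesis by simp
    qed
    then show ?thesis by auto
  qed
  have wr: "well_rounded L" unfolding well_rounded_def using lat sp by simp
  have LW: "L \<in> WR_Z2" unfolding WR_Z2_def using lat sub wr by simp
  have ld: "lat_det L = real p" using lat_det_eq[OF lb] dab by simp
  then show "lat_det (lat_gen a b) = real p" unfolding L_def .
  have "sin (wr_theta L) = real p / real q" using wr_theta_sin[OF LW] ld lm by simp
  then show "lat_gen a b \<in> C_set p q" using LW unfolding C_set_def L_def by simp
qed

definition Umap :: "real \<times> real \<Rightarrow> real \<times> real \<Rightarrow> real \<times> real \<Rightarrow> real \<times> real \<Rightarrow> real \<Rightarrow> real \<times> real \<Rightarrow> real \<times> real" where
  "Umap a b a' b' c v = (det2 v b / det2 a b) *\<^sub>R ((1/c) *\<^sub>R a') + (det2 a v / det2 a b) *\<^sub>R ((1/c) *\<^sub>R b')"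

lemma det2_add_left: "det2 (u + v) w = det2 u w + det2 v w" unfolding det2_def by (simp add: algebra_simps)
lemma det2_add_right: "det2 w (u + v) = det2 w u + det2 w v" unfolding det2_def by (simp add: algebra_simps)
lemma det2_scale_left: "det2 (r *\<^sub>R u) w = r * det2 u w" unfolding det2_def by (simp add: algebra_simps)
lemma det2_scale_right: "det2 w (r *\<^sub>R u) = r * det2 w u" unfolding det2_def by (simp add: algebra_simps)

lemma Umap_linear: "linear (Umap a b a' b' c)"
proof (rule linearI)
  fix u v show "Umap a b a' b' c (u + v) = Umap a b a' b' c u + Umap a b a' b' c v"
    unfolding Umap_def det2_add_left det2_add_right by (simp add: add_divide_distrib scaleR_add_left)
next
  fix r :: real and u show "Umap a b a' b' c (r *\<^sub>R u) = r *\<^sub>R Umap a b a' b' c u"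
    unfolding Umap_def det2_scale_left det2_scale_right by (simp add: scaleR_add_right)
qed

lemma Umap_comb:
  assumes d: "det2 a b \<noteq> 0"
  shows "Umap a b a' b' c (\<alpha> *\<^sub>R a + \<beta> *\<^sub>R b) = \<alpha> *\<^sub>R ((1/c) *\<^sub>R a') + \<beta> *\<^sub>R ((1/c) *\<^sub>R b')"
proof -
  have "det2 (\<alpha> *\<^sub>R a + \<beta> *\<^sub>R b) b = \<alpha> * det2 a b" "det2 a (\<alpha> *\<^sub>R a + \<beta> *\<^sub>R b) = \<beta> * det2 a b"
    unfolding det2_def by (simp_all add: algebra_simps)
  then show ?thesis unfolding Umap_def using d by simp
qed

lemma Umap_orth:
  assumes d: "det2 a b \<noteq> 0" and c: "c > 0"
    and aa: "a' \<bullet> a' = c^2 * (a \<bullet> a)" and bb: "b' \<bullet> b' = c^2 * (b \<bullet> b)" and ab: "a' \<bullet> b' = c^2 * (a \<bullet> b)"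
  shows "orthogonal_transformation (Umap a b a' b' c)"
  unfolding orthogonal_transformation_def
proof (intro conjI allI)
  show "linear (Umap a b a' b' c)" by (rule Umap_linear)
  fix v w
  define A where "A = (1/c) *\<^sub>R a'"
  define B where "B = (1/c) *\<^sub>R b'"
  have AA: "A \<bullet> A = a \<bullet> a" "B \<bullet> B = b \<bullet> b" "A \<bullet> B = a \<bullet> b"
    unfolding A_def B_def using aa bb ab c by (simp_all add: power2_eq_square)
  obtain \<alpha> \<beta> where v: "v = \<alpha> *\<^sub>R a + \<beta> *\<^sub>R b" using coords2[OF d] by blast
  obtain \<gamma> \<delta> where w: "w = \<gamma> *\<^sub>R a + \<delta> *\<^sub>R b" using coords2[OF d] by blast
  have "Umap a b a' b' c v \<bullet> Umap a b a' b' c w = (\<alpha> *\<^sub>R A + \<beta> *\<^sub>R B) \<bullet> (\<gamma> *\<^sub>R A + \<delta> *\<^sub>R B)"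
    unfolding v w Umap_comb[OF d] A_def B_def by simp
  also have "\<dots> = v \<bullet> w" unfolding inner_comb v w AA ..
  finally show "Umap a b a' b' c v \<bullet> Umap a b a' b' c w = v \<bullet> w" .
qed

lemma Umap_image:
  assumes d: "det2 a b \<noteq> 0" and c: "c > 0"
  shows "(\<lambda>v. c *\<^sub>R Umap a b a' b' c v) ` lat_gen a b = lat_gen a' b'"
proof -
  have e: "c *\<^sub>R Umap a b a' b' c (of_int i *\<^sub>R a + of_int j *\<^sub>R b) = of_int i *\<^sub>R a' + of_int j *\<^sub>R b'" for i j
    unfolding Umap_comb[OF d] using c by (simp add: scaleR_add_right)
  show ?thesis
  proof
    show "(\<lambda>v. c *\<^sub>R Umap a b a' b' c v) ` lat_gen a b \<subseteq> lat_gen a' b'"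
    proof
      fix z assume "z \<in> (\<lambda>v. c *\<^sub>R Umap a b a' b' c v) ` lat_gen a b"
      then obtain i j where "z = c *\<^sub>R Umap a b a' b' c (of_int i *\<^sub>R a + of_int j *\<^sub>R b)"
        unfolding lat_gen_def by blast
      then show "z \<in> lat_gen a' b'" using e lat_gen_mem by metis
    qed
    show "lat_gen a' b' \<subseteq> (\<lambda>v. c *\<^sub>R Umap a b a' b' c v) ` lat_gen a b"
    proof
      fix z assume "z \<in> lat_gen a' b'"
      then obtain i j where z: "z = of_int i *\<^sub>R a' + of_int j *\<^sub>R b'" unfolding lat_gen_def by blast
      show "z \<in> (\<lambda>v. c *\<^sub>R Umap a b a' b' c v) ` lat_gen a b"
        unfolding z e[symmetric] by (rule imageI[OF lat_gen_mem])
    qed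
  qed
qed

lemma powr_key:
  fixes s :: complex and n K Q :: real
  assumes n: "n > 0" and K: "K > 0" and Q: "Q > 0" and e: "n^2 = K * Q"
  shows "complex_of_real n powr (- 2 * s) = complex_of_real (1/K) powr s * complex_of_real Q powr (- s)"
proof -
  have "ln (n^2) = ln (K * Q)" using e by simp
  then have l: "2 * ln n = ln K + ln Q" using n K Q by (simp add: ln_realpow ln_mult)
  have e1: "complex_of_real n powr (- 2 * s) = exp ((- 2 * s) * of_real (ln n))"
    unfolding powr_def using n by (simp add: Ln_of_real)
  have e2: "complex_of_real (1/K) powr s = exp (s * of_real (- ln K))"
  proof -
    have h: "ln (complex_of_real (1/K)) = of_real (ln (1/K))" by (rule Ln_of_real) (use K in simp)
    have "ln (1/K) = - ln K" using K by (simp add: ln_div)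
    then have h2: "ln (complex_of_real (1/K)) = of_real (- ln K)" using h by simp
    have "complex_of_real (1/K) \<noteq> 0" using K by simp
    then show ?thesis unfolding powr_def using h2 by (simp only: if_False)
  qed
  have e3: "complex_of_real Q powr (- s) = exp ((- s) * of_real (ln Q))"
    unfolding powr_def using Q by (simp add: Ln_of_real)
  have e4: "(- 2 * s) * of_real (ln n) = s * of_real (- ln K) + (- s) * of_real (ln Q)"
  proof -
    have "of_real (2 * ln n) = (of_real (ln K + ln Q) :: complex)" using l by simp
    then have "2 * (of_real (ln n) :: complex) = of_real (ln K) + of_real (ln Q)" by simp
    then show ?thesis by (simp add: algebra_simps)
  qed
  show ?thesis unfolding e1 e2 e3 e4 exp_add ..
qed

lemma Qpq_even: "Qpq p q (- a) (- b) = Qpq p q a b" unfolding Qpq_def by simp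

lemma epstein_eq:
  assumes lb: "lattice_basis L x y" and K: "K > 0"
    and nq: "\<And>i j::int. (norm (of_int i *\<^sub>R x + of_int j *\<^sub>R y))^2 = K * Qpq p q (of_int i) (of_int j)"
  shows "epstein L s = complex_of_real (1/K) powr s * Qpq_zeta p q s"
proof -
  have d: "det2 x y \<noteq> 0" and L: "L = lat_gen x y" using lb unfolding lattice_basis_def by auto
  define \<phi> where "\<phi> = (\<lambda>z::int\<times>int. of_int (fst z) *\<^sub>R x + of_int (snd z) *\<^sub>R y)"
  have phi_neg: "\<phi> (- z) = - \<phi> z" for z unfolding \<phi>_def by (simp add: algebra_simps)
  have inj: "inj \<phi>"
  proof (rule injI)
    fix z w assume "\<phi> z = \<phi> w"
    then have "of_int (fst z - fst w) *\<^sub>R x + of_int (snd z - snd w) *\<^sub>R y = 0"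
      unfolding \<phi>_def by (simp add: algebra_simps)
    from indep2[OF d this] show "z = w" by (simp add: prod_eq_iff)
  qed
  have phi0: "\<phi> 0 = 0" unfolding \<phi>_def by simp
  have phinz: "\<phi> z \<noteq> 0" if "z \<noteq> 0" for z using inj phi0 that by (metis injD)
  have phiL: "\<phi> z \<in> L" for z unfolding L \<phi>_def by (rule lat_gen_mem)
  have surjL: "\<exists>z. v = \<phi> z" if vL: "v \<in> L" for v
  proof -
    obtain i j where "v = of_int i *\<^sub>R x + of_int j *\<^sub>R y" using vL unfolding L lat_gen_def by blast
    then show ?thesis unfolding \<phi>_def by (intro exI[of _ "(i,j)"]) simp
  qed
  define F where "F = (\<lambda>v::real\<times>real. complex_of_real (norm v) powr (- 2 * s))"
  define G where "G = (\<lambda>(i::int, j::int). complex_of_real (Qpq p q (of_int i) (of_int j)) powr (- s))"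
  define CL where "CL = {{v, - v} | v. v \<in> L - {0}}"
  define CZ where "CZ = {{z, - z} | z::int\<times>int. z \<in> UNIV - {0}}"
  define K' where "K' = complex_of_real (1/K) powr s"
  have ep: "epstein L s = infsum (\<lambda>C. F (SOME v. v \<in> C)) CL"
    unfolding epstein_def sum_pm_def F_def CL_def ..
  have zq: "Qpq_zeta p q s = infsum (\<lambda>C. G (SOME w. w \<in> C)) CZ"
    unfolding Qpq_zeta_def sum_pm_def G_def CZ_def ..
  have imgC: "(\<lambda>C. \<phi> ` C) ` CZ = CL"
  proof
    show "(\<lambda>C. \<phi> ` C) ` CZ \<subseteq> CL"
    proof
      fix D assume "D \<in> (\<lambda>C. \<phi> ` C) ` CZ"
      then obtain z where z: "z \<noteq> 0" "D = \<phi> ` {z, - z}" unfolding CZ_def by blast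
      then have "D = {\<phi> z, - \<phi> z}" using phi_neg by simp
      then show "D \<in> CL" unfolding CL_def using phinz[OF z(1)] phiL by blast
    qed
    show "CL \<subseteq> (\<lambda>C. \<phi> ` C) ` CZ"
    proof
      fix D assume "D \<in> CL"
      then obtain v where v: "v \<in> L" "v \<noteq> 0" "D = {v, - v}" unfolding CL_def by blast
      obtain z where z: "v = \<phi> z" using surjL[OF v(1)] by blast
      have "z \<noteq> 0" using v(2) z phi0 by auto
      moreover have "D = \<phi> ` {z, - z}" using v(3) z phi_neg by simp
      ultimately show "D \<in> (\<lambda>C. \<phi> ` C) ` CZ" unfolding CZ_def by blast
    qed
  qed
  have bij: "bij_betw (\<lambda>C. \<phi> ` C) CZ CL"
    unfolding bij_betw_def using imgC inj_on_image[of \<phi> CZ] inj by (simp add: inj_on_subset[OF inj])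
  have ep2: "epstein L s = infsum (\<lambda>C. F (SOME v. v \<in> \<phi> ` C)) CZ"
    unfolding ep using infsum_reindex_bij_betw[OF bij, of "\<lambda>C. F (SOME v. v \<in> C)"] by simp
  have cong: "F (SOME v. v \<in> \<phi> ` C) = K' * G (SOME w. w \<in> C)" if CZ: "C \<in> CZ" for C
  proof -
    obtain z where z: "z \<noteq> 0" "C = {z, - z}" using CZ unfolding CZ_def by blast
    obtain i j where ij: "z = (i, j)" by (cases z)
    have "(SOME v. v \<in> \<phi> ` C) \<in> \<phi> ` C" by (rule someI_ex) (use z in blast)
    then have "(SOME v. v \<in> \<phi> ` C) \<in> {\<phi> z, - \<phi> z}" using z(2) phi_neg by simp
    then have F1: "F (SOME v. v \<in> \<phi> ` C) = F (\<phi> z)" unfolding F_def by auto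
    have "(SOME w. w \<in> C) \<in> C" by (rule someI_ex) (use z in blast)
    then have "(SOME w. w \<in> C) \<in> {z, - z}" using z(2) by simp
    then have G1: "G (SOME w. w \<in> C) = G z" unfolding G_def ij using Qpq_even by auto
    define n where "n = norm (\<phi> z)"
    define Q where "Q = Qpq p q (of_int i) (of_int j)"
    have n0: "n > 0" unfolding n_def using phinz[OF z(1)] by simp
    have e: "n^2 = K * Q" unfolding n_def Q_def \<phi>_def ij using nq by simp
    have "n^2 > 0" using n0 by simp
    then have Q0: "Q > 0" using e K by (simp add: zero_less_mult_iff)
    have "F (\<phi> z) = K' * G z" unfolding F_def G_def ij K'_def
      using powr_key[OF n0 K Q0 e, of s] unfolding n_def Q_def ij by simp
    then show ?thesis using F1 G1 by simp
  qed
  have "epstein L s = infsum (\<lambda>C. K' * G (SOME w. w \<in> C)) CZ"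
    unfolding ep2 by (rule infsum_cong) (rule cong)
  also have "\<dots> = K' * infsum (\<lambda>C. G (SOME w. w \<in> C)) CZ" by (rule infsum_cmult_right')
  finally show ?thesis unfolding zq K'_def .
qed

lemma Umap_rat:
  assumes "a \<in> Z2" "b \<in> Z2" "x \<in> Z2" "y \<in> Z2" "v \<in> Z2"
  shows "fst (Umap a b x y 1 v) \<in> \<rat>" "snd (Umap a b x y 1 v) \<in> \<rat>"
proof -
  obtain a1 a2 where a: "a = (of_int a1, of_int a2)" using Z2_vec[OF assms(1)] by blast
  obtain b1 b2 where b: "b = (of_int b1, of_int b2)" using Z2_vec[OF assms(2)] by blast
  obtain x1 x2 where x: "x = (of_int x1, of_int x2)" using Z2_vec[OF assms(3)] by blast
  obtain y1 y2 where y: "y = (of_int y1, of_int y2)" using Z2_vec[OF assms(4)] by blast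
  obtain v1 v2 where v: "v = (of_int v1, of_int v2)" using Z2_vec[OF assms(5)] by blast
  show "fst (Umap a b x y 1 v) \<in> \<rat>" unfolding Umap_def a b x y v det2_def
    by (simp del: of_int_mult of_int_diff add: of_int_mult[symmetric] of_int_diff[symmetric])
  show "snd (Umap a b x y 1 v) \<in> \<rat>" unfolding Umap_def a b x y v det2_def
    by (simp del: of_int_mult of_int_diff add: of_int_mult[symmetric] of_int_diff[symmetric])
qed

lemma zeta_re_nonneg:
  assumes Q: "\<And>i j::int. Qpq p q (of_int i) (of_int j) \<ge> 0"
  shows "Re (Qpq_zeta p q (complex_of_real s)) \<ge> 0"
proof -
  define f where "f = (\<lambda>C. (\<lambda>(i::int, j::int). complex_of_real (Qpq p q (of_int i) (of_int j)) powr (- complex_of_real s)) (SOME w. w \<in> C))"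
  define CZ where "CZ = {{x, - x} |x::int\<times>int. x \<in> UNIV - {0}}"
  have z: "Qpq_zeta p q (complex_of_real s) = infsum f CZ" unfolding Qpq_zeta_def sum_pm_def f_def CZ_def ..
  have pos: "Re (f C) \<ge> 0" for C
  proof -
    obtain i j where w: "(SOME w. w \<in> C) = (i, j)" by (cases "SOME w. w \<in> C")
    have "complex_of_real (Qpq p q (of_int i) (of_int j)) powr (- complex_of_real s)
        = complex_of_real (Qpq p q (of_int i) (of_int j) powr (- s))"
      using powr_of_real[OF Q[of i j], of "- s"] by simp
    then show ?thesis unfolding f_def w by simp
  qed
  show ?thesis
  proof (cases "f summable_on CZ")
    case True
    have "Re (infsum f CZ) = infsum (\<lambda>C. Re (f C)) CZ" using infsum_Re[OF True] by simp
    also have "\<dots> \<ge> 0" using pos by (intro infsum_nonneg) auto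
    finally show ?thesis unfolding z by simp
  next
    case False
    then show ?thesis unfolding z by (simp add: infsum_not_exists)
  qed
qed

theorem theorem1p3:
  fixes p q :: nat
  assumes "in_S p q"
  shows "\<exists>\<Lambda>. \<Lambda> \<in> C_set p q
    \<and> lat_min \<Lambda> = sqrt (real q) \<and> (\<forall>L\<in>C_set p q. lat_min \<Lambda> \<le> lat_min L)
    \<and> lat_det \<Lambda> = real p \<and> (\<forall>L\<in>C_set p q. lat_det \<Lambda> \<le> lat_det L)
    \<and> (\<exists>a b. minimal_basis \<Lambda> a b \<and> (\<forall>x y. norm_form a b x y = Qpq p q x y))
    \<and> (\<forall>L\<in>C_set p q.
         (\<exists>U. orthogonal_transformation U \<and>
              L = (\<lambda>v. sqrt (lat_det L / real p) *\<^sub>R U v) ` \<Lambda>)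
       \<and> (\<exists>a b. minimal_basis L a b \<and>
              (\<forall>x y. norm_form a b x y = lat_det L / real p * Qpq p q x y)))
    \<and> (\<forall>L\<in>C_set p q. \<forall>s::complex. Re s > 1 \<longrightarrow>
         epstein L s = complex_of_real (real p / lat_det L) powr s * Qpq_zeta p q s)
    \<and> (\<forall>s::real. s > 1 \<longrightarrow>
         (\<forall>L\<in>C_set p q. Re (epstein L (of_real s)) \<le> Re (epstein \<Lambda> (of_real s))))
    \<and> (\<forall>\<Lambda>'\<in>C_set p q. lat_min \<Lambda>' = sqrt (real q) \<and> lat_det \<Lambda>' = real p \<longrightarrow>
         (\<exists>U. orthogonal_transformation U
              \<and> fst (U (1,0)) \<in> \<rat> \<and> snd (U (1,0)) \<in> \<rat>
              \<and> fst (U (0,1)) \<in> \<rat> \<and> snd (U (0,1)) \<in> \<rat>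
              \<and> \<Lambda>' = U ` \<Lambda>))"
proof -
  note F = inS_facts[OF assms]
  note R = rho_facts[OF assms]
  define \<rho> where "\<rho> = sqrt ((real q)^2 - (real p)^2)"
  obtain a b where aZ: "a \<in> Z2" and bZ: "b \<in> Z2" and aa: "a \<bullet> a = real q" and bb: "b \<bullet> b = real q"
    and ab: "a \<bullet> b = sqrt ((real q)^2 - (real p)^2)" and dab: "\<bar>det2 a b\<bar> = real p"
    using Lam_basis[OF assms] by blast
  define \<Lambda> where "\<Lambda> = lat_gen a b"
  note LP = Lam_props[OF assms aZ bZ aa bb ab dab, folded \<Lambda>_def]
  have d: "det2 a b \<noteq> 0" using dab F(1) by auto
  have p0: "real p > 0" using F(1) by simp
  have q0: "real q > 0" using F(2) by simp
  have Qnn: "Qpq p q (of_int i) (of_int j) \<ge> 0" for i j :: int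
    using LP(5) unfolding norm_form_def by (metis zero_le_power2)
  have lbL: "lattice_basis \<Lambda> a b" using LP(4) unfolding minimal_basis_def by simp
  have epsL: "epstein L s = complex_of_real (real p / lat_det L) powr s * Qpq_zeta p q s"
    and detge: "real p \<le> lat_det L"
    and minge: "sqrt (real q) \<le> lat_min L"
    and rot: "\<exists>U. orthogonal_transformation U \<and> L = (\<lambda>v. sqrt (lat_det L / real p) *\<^sub>R U v) ` \<Lambda>"
    and nfL: "\<exists>a b. minimal_basis L a b \<and> (\<forall>x y. norm_form a b x y = lat_det L / real p * Qpq p q x y)"
    if LC: "L \<in> C_set p q" for L s
  proof -
    obtain k :: nat where k1: "k \<ge> 1" and Dk: "lat_det L = real k * real p"
      and mk: "lat_min L = sqrt (real k * real q)"
      and xy: "\<exists>x y. minimal_basis L x y \<and> x \<bullet> x = real k * real q \<and> y \<bullet> y = real k * real q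
        \<and> x \<bullet> y = real k * sqrt ((real q)^2 - (real p)^2)"
      using C_struct[OF assms LC] by blast
    obtain x y where mb: "minimal_basis L x y" and xx: "x \<bullet> x = real k * real q" and yy: "y \<bullet> y = real k * real q"
      and xy': "x \<bullet> y = real k * sqrt ((real q)^2 - (real p)^2)" using xy by blast
    have lb: "lattice_basis L x y" using mb unfolding minimal_basis_def by simp
    have k0: "real k > 0" using k1 by simp
    have Kq: "lat_det L / real p = real k" using Dk p0 by simp
    have nfk: "norm_form x y X Y = lat_det L / real p * Qpq p q X Y" for X Y
      unfolding Kq norm_form_def norm_comb xx yy xy' Qpq_def by (simp add: algebra_simps)
    show "\<exists>a b. minimal_basis L a b \<and> (\<forall>x y. norm_form a b x y = lat_det L / real p * Qpq p q x y)"
      using mb nfk by blast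
    show "real p \<le> lat_det L" using Dk k1 p0 by simp
    show "sqrt (real q) \<le> lat_min L" unfolding mk using k1 q0 by simp
    define c where "c = sqrt (real k)"
    have c0: "c > 0" unfolding c_def using k0 by simp
    have c2: "c^2 = real k" unfolding c_def using k0 by simp
    have orth: "orthogonal_transformation (Umap a b x y c)"
      by (rule Umap_orth[OF d c0]) (simp_all add: c2 aa bb ab xx yy xy')
    have "(\<lambda>v. c *\<^sub>R Umap a b x y c v) ` \<Lambda> = L"
      unfolding \<Lambda>_def Umap_image[OF d c0] using lb unfolding lattice_basis_def by simp
    moreover have "sqrt (lat_det L / real p) = c" unfolding Kq c_def ..
    ultimately show "\<exists>U. orthogonal_transformation U \<and> L = (\<lambda>v. sqrt (lat_det L / real p) *\<^sub>R U v) ` \<Lambda>"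
      using orth by auto
    have nq: "(norm (of_int i *\<^sub>R x + of_int j *\<^sub>R y))^2 = real k * Qpq p q (of_int i) (of_int j)" for i j :: int
      using nfk[of "of_int i" "of_int j"] unfolding norm_form_def Kq .
    have "epstein L s = complex_of_real (1 / real k) powr s * Qpq_zeta p q s"
      by (rule epstein_eq[OF lb k0 nq])
    moreover have "1 / real k = real p / lat_det L" using Dk p0 by simp
    ultimately show "epstein L s = complex_of_real (real p / lat_det L) powr s * Qpq_zeta p q s" by simp
  qed
  have epsLam: "epstein \<Lambda> s = Qpq_zeta p q s" for s
    using epsL[OF LP(1), of s] LP(3) p0 by simp
  have c3: "\<forall>L\<in>C_set p q. lat_min \<Lambda> \<le> lat_min L" using minge LP(2) by simp
  have c5: "\<forall>L\<in>C_set p q. lat_det \<Lambda> \<le> lat_det L" using detge LP(3) by simp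
  have c6: "\<exists>a b. minimal_basis \<Lambda> a b \<and> (\<forall>x y. norm_form a b x y = Qpq p q x y)"
    using LP(4,5) by blast
  have c7: "\<forall>L\<in>C_set p q.
         (\<exists>U. orthogonal_transformation U \<and>
              L = (\<lambda>v. sqrt (lat_det L / real p) *\<^sub>R U v) ` \<Lambda>)
       \<and> (\<exists>a b. minimal_basis L a b \<and>
              (\<forall>x y. norm_form a b x y = lat_det L / real p * Qpq p q x y))"
    using rot nfL by blast
  have c8: "\<forall>L\<in>C_set p q. \<forall>s::complex. Re s > 1 \<longrightarrow>
         epstein L s = complex_of_real (real p / lat_det L) powr s * Qpq_zeta p q s"
    using epsL by blast
  have c9: "\<forall>s::real. s > 1 \<longrightarrow>
         (\<forall>L\<in>C_set p q. Re (epstein L (of_real s)) \<le> Re (epstein \<Lambda> (of_real s)))"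
  proof (intro allI impI ballI)
    fix s :: real and L assume s1: "s > 1" and LC: "L \<in> C_set p q"
    define D where "D = lat_det L"
    have D0: "D \<ge> real p" using detge[OF LC] unfolding D_def .
    define t where "t = (real p / D) powr s"
    have tle: "t \<le> 1" unfolding t_def using D0 p0 s1 by (intro powr_le1) auto
    have t0: "t \<ge> 0" unfolding t_def by simp
    have "epstein L (complex_of_real s) = complex_of_real t * Qpq_zeta p q (complex_of_real s)"
      using epsL[OF LC, of "complex_of_real s"] powr_of_real[of "real p / D" s] D0 p0
      unfolding t_def D_def by simp
    then have "Re (epstein L (complex_of_real s)) = t * Re (Qpq_zeta p q (complex_of_real s))" by simp
    also have "\<dots> \<le> 1 * Re (Qpq_zeta p q (complex_of_real s))"
      using tle zeta_re_nonneg[OF Qnn] by (intro mult_right_mono) auto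
    also have "\<dots> = Re (epstein \<Lambda> (complex_of_real s))" using epsLam by simp
    finally show "Re (epstein L (complex_of_real s)) \<le> Re (epstein \<Lambda> (complex_of_real s))" .
  qed
  have c10: "\<forall>\<Lambda>'\<in>C_set p q. lat_min \<Lambda>' = sqrt (real q) \<and> lat_det \<Lambda>' = real p \<longrightarrow>
         (\<exists>U. orthogonal_transformation U
              \<and> fst (U (1,0)) \<in> \<rat> \<and> snd (U (1,0)) \<in> \<rat>
              \<and> fst (U (0,1)) \<in> \<rat> \<and> snd (U (0,1)) \<in> \<rat>
              \<and> \<Lambda>' = U ` \<Lambda>)"
  proof (intro ballI impI)
    fix \<Lambda>' assume LC: "\<Lambda>' \<in> C_set p q" and hm: "lat_min \<Lambda>' = sqrt (real q) \<and> lat_det \<Lambda>' = real p"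
    obtain k :: nat where k1: "k \<ge> 1" and Dk: "lat_det \<Lambda>' = real k * real p"
      and xy: "\<exists>x y. minimal_basis \<Lambda>' x y \<and> x \<bullet> x = real k * real q \<and> y \<bullet> y = real k * real q
        \<and> x \<bullet> y = real k * sqrt ((real q)^2 - (real p)^2)"
      using C_struct[OF assms LC] by blast
    have "real k * real p = 1 * real p" using Dk hm by simp
    then have k: "real k = 1" using p0 by simp
    obtain x y where mb: "minimal_basis \<Lambda>' x y" and xx: "x \<bullet> x = real q" and yy: "y \<bullet> y = real q"
      and xy': "x \<bullet> y = sqrt ((real q)^2 - (real p)^2)" using xy k by auto
    have lb: "lattice_basis \<Lambda>' x y" using mb unfolding minimal_basis_def by simp
    have orth: "orthogonal_transformation (Umap a b x y 1)"
      by (rule Umap_orth[OF d]) (simp_all add: aa bb ab xx yy xy')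
    have img: "(\<lambda>v. 1 *\<^sub>R Umap a b x y 1 v) ` \<Lambda> = \<Lambda>'"
      unfolding \<Lambda>_def Umap_image[OF d zero_less_one] using lb unfolding lattice_basis_def by simp
    have sub: "\<Lambda>' \<subseteq> Z2" using LC unfolding C_set_def WR_Z2_def by simp
    have xZ: "x \<in> Z2" "y \<in> Z2" using sub lb lat_gen_a lat_gen_b unfolding lattice_basis_def by blast+
    have e10: "(1::real, 0::real) \<in> Z2" "(0::real, 1::real) \<in> Z2" using Z2I[of 1 0] Z2I[of 0 1] by simp_all
    show "\<exists>U. orthogonal_transformation U
              \<and> fst (U (1,0)) \<in> \<rat> \<and> snd (U (1,0)) \<in> \<rat>
              \<and> fst (U (0,1)) \<in> \<rat> \<and> snd (U (0,1)) \<in> \<rat>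
              \<and> \<Lambda>' = U ` \<Lambda>"
      apply (rule exI[of _ "Umap a b x y 1"])
      using orth img Umap_rat[OF aZ bZ xZ e10(1)] Umap_rat[OF aZ bZ xZ e10(2)] by simp
  qed
  show ?thesis
    using LP(1) LP(2) c3 LP(3) c5 c6 c7 c8 c9 c10
    by (intro exI[of _ \<Lambda>] conjI) assumption+
qed

end
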